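(* Let $H$ and $\alpha$ be entire functions such that $H'$ and $\alpha'$ have no common zeros. For $a\in\mathbb{C}$ put $H_a(z):=H(z)+a\alpha(z)$. Then there exists an at most countable set $E\subset\mathbb{C}$ such that for every $a\in\mathbb{C}\setminus E$, every $c\in\mathbb{C}$ and all $z,w\in\{\zeta\in\mathbb{C}: H_a(\zeta)=c,\ H_a'(\zeta)=0\}$ we have $\alpha(z)=\alpha(w)$. *)

theory Defs
  imports "HOL-Complex_Analysis.Complex_Analysis"
begin

end

theory Submission imports Defs begin

lemma discrete_countable:
  fixes P :: "'a::{metric_space, second_countable_topology} set"
  assumes "\<And>p. p \<in> P \<Longrightarrow> \<exists>e>0. \<forall>q\<in>P. dist q p < e \<longrightarrow> q = p"
  shows "countable P"
proof -
  obtain r where r: "\<And>p. p \<in> P \<Longrightarrow> r p > 0 \<and> (\<forall>q\<in>P. dist q p < r p \<longrightarrow> q = p)"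
    using assms by metis
  define B where "B p = ball p (r p / 2)" for p
  have inj: "inj_on B P"
  proof (rule inj_onI)
    fix p q assume "p \<in> P" "q \<in> P" "B p = B q"
    have "p \<in> B p" using r[of p] \<open>p \<in> P\<close> by (simp add: B_def)
    then have "p \<in> B q" using \<open>B p = B q\<close> by simp
    then have "dist q p < r q" using r[of q] \<open>q \<in> P\<close> by (simp add: B_def)
    then show "p = q" using r[of q] \<open>p \<in> P\<close> \<open>q \<in> P\<close> by (metis dist_commute)
  qed
  have "countable (B ` P)"
  proof (rule countable_disjoint_open_subsets)
    show "open S" if "S \<in> B ` P" for S using that by (auto simp: B_def)
    show "pairwise disjnt (B ` P)"
    proof (clarsimp simp: pairwise_def disjnt_def)
      fix p q assume pq: "p \<in> P" "q \<in> P" "B p \<noteq> B q"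
      show "B p \<inter> B q = {}"
      proof (rule ccontr)
        assume "B p \<inter> B q \<noteq> {}"
        then obtain x where x: "dist p x < r p / 2" "dist q x < r q / 2" by (auto simp: B_def)
        then have d: "dist p q < r p / 2 + r q / 2" by (metis dist_triangle_half_r add_strict_mono dist_commute dist_triangle order_le_less_trans)
        show False
        proof (cases "r p \<le> r q")
          case True
          then have "dist p q < r q" using d by simp
          then show False using r[of q] pq by auto
        next
          case False
          then have "dist q p < r p" using d by (simp add: dist_commute)
          then show False using r[of p] pq by auto
        qed
      qed
    qed
  qed
  then show ?thesis by (rule countable_image_inj_on[OF _ inj])
qed

lemma isolated_from_inj_deriv:
  fixes F :: "'a::euclidean_space \<Rightarrow> 'b::euclidean_space"
  assumes "(F has_derivative L) (at p)" "inj L"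
  shows "\<exists>e>0. \<forall>q. dist q p < e \<longrightarrow> F q = F p \<longrightarrow> q = p"
proof -
  have lin: "linear L" using assms(1) has_derivative_linear by blast
  obtain B where B: "B > 0" "\<And>x. B * norm x \<le> norm (L x)"
    using linear_inj_bounded_below_pos[OF lin assms(2)] by blast
  have "\<forall>e>0. \<exists>d>0. \<forall>y. norm (y - p) < d \<longrightarrow> norm (F y - F p - L (y - p)) \<le> e * norm (y - p)"
    using assms(1) unfolding has_derivative_at_alt by blast
  then have "\<exists>d>0. \<forall>y. norm (y - p) < d \<longrightarrow> norm (F y - F p - L (y - p)) \<le> (B/2) * norm (y - p)"
    using B(1) half_gt_zero by blast
  then obtain d where d: "d > 0" "\<And>y. norm (y - p) < d \<Longrightarrow> norm (F y - F p - L (y - p)) \<le> (B/2) * norm (y - p)"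
    by blast
  show ?thesis
  proof (intro exI[of _ d] conjI allI impI)
    fix q assume "dist q p < d" "F q = F p"
    then have "norm (L (q - p)) \<le> (B/2) * norm (q - p)"
      using d(2)[of q] by (simp add: dist_norm norm_minus_commute)
    with B(2)[of "q - p"] have "(B/2) * norm (q - p) \<le> 0"
      by linarith
    with B(1) have "norm (q - p) \<le> 0"
      by (simp add: mult_le_0_iff)
    then show "q = p" by simp
  qed (use d in auto)
qed


theorem lemma2p1:
  fixes H \<alpha> :: "complex \<Rightarrow> complex"
  assumes "H holomorphic_on UNIV"
    and "\<alpha> holomorphic_on UNIV"
    and "\<And>z. \<not> (deriv H z = 0 \<and> deriv \<alpha> z = 0)"
  shows "\<exists>E :: complex set. countable E \<and>
           (\<forall>a. a \<notin> E \<longrightarrow> (\<forall>c z w.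
              z \<in> {\<zeta>. H \<zeta> + a * \<alpha> \<zeta> = c \<and> deriv (\<lambda>\<xi>. H \<xi> + a * \<alpha> \<xi>) \<zeta> = 0} \<longrightarrow>
              w \<in> {\<zeta>. H \<zeta> + a * \<alpha> \<zeta> = c \<and> deriv (\<lambda>\<xi>. H \<xi> + a * \<alpha> \<xi>) \<zeta> = 0} \<longrightarrow>
              \<alpha> z = \<alpha> w))"
proof -
  define H1 where "H1 = deriv H"
  define A1 where "A1 = deriv \<alpha>"
  define H2 where "H2 = deriv H1"
  define A2 where "A2 = deriv A1"
  have hH1: "H1 holomorphic_on UNIV" unfolding H1_def using assms(1) by (simp add: holomorphic_deriv)
  have hA1: "A1 holomorphic_on UNIV" unfolding A1_def using assms(2) by (simp add: holomorphic_deriv)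
  have hH2: "H2 holomorphic_on UNIV" unfolding H2_def using hH1 by (simp add: holomorphic_deriv)
  have hA2: "A2 holomorphic_on UNIV" unfolding A2_def using hA1 by (simp add: holomorphic_deriv)
  have dH: "\<And>z. (H has_field_derivative H1 z) (at z)"
    unfolding H1_def using assms(1)
    by (meson DERIV_deriv_iff_field_differentiable holomorphic_on_imp_differentiable_at open_UNIV UNIV_I)
  have dA: "\<And>z. (\<alpha> has_field_derivative A1 z) (at z)"
    unfolding A1_def using assms(2)
    by (meson DERIV_deriv_iff_field_differentiable holomorphic_on_imp_differentiable_at open_UNIV UNIV_I)
  have dH1: "\<And>z. (H1 has_field_derivative H2 z) (at z)"
    unfolding H2_def using hH1
    by (meson DERIV_deriv_iff_field_differentiable holomorphic_on_imp_differentiable_at open_UNIV UNIV_I)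
  have dA1: "\<And>z. (A1 has_field_derivative A2 z) (at z)"
    unfolding A2_def using hA1
    by (meson DERIV_deriv_iff_field_differentiable holomorphic_on_imp_differentiable_at open_UNIV UNIV_I)
  have dHa: "deriv (\<lambda>\<xi>. H \<xi> + a * \<alpha> \<xi>) z = H1 z + a * A1 z" for a z
    by (rule DERIV_imp_deriv) (intro DERIV_add DERIV_cmult dH dA)
  have nz: "\<And>z. \<not> (H1 z = 0 \<and> A1 z = 0)" using assms(3) by (simp add: H1_def A1_def)
  have crit: "A1 z \<noteq> 0 \<and> a = - H1 z / A1 z" if "H1 z + a * A1 z = 0" for a z
  proof -
    have "A1 z \<noteq> 0" using nz[of z] that by auto
    then show ?thesis using that by (auto simp: field_simps add_eq_0_iff)
  qed
  have red: "\<exists>E :: complex set. countable E \<and>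
     (\<forall>a z w. a \<notin> E \<longrightarrow> H1 z + a * A1 z = 0 \<longrightarrow> H1 w + a * A1 w = 0 \<longrightarrow>
        H z + a * \<alpha> z = H w + a * \<alpha> w \<longrightarrow> \<alpha> z = \<alpha> w)"
  proof (cases "\<forall>z. A1 z = 0")
    case True
    have "\<exists>c. \<forall>x\<in>UNIV. \<alpha> x = c"
      by (rule has_field_derivative_zero_constant) (use dA True in \<open>auto intro: has_field_derivative_at_within\<close>)
    then show ?thesis by (intro exI[of _ "{}"]) auto
  next
    case False
    then obtain z0 where z0: "A1 z0 \<noteq> 0" by auto
    define K where "K z = H2 z * A1 z - H1 z * A2 z" for z
    have hK: "K holomorphic_on UNIV" unfolding K_def[abs_def]
      by (intro holomorphic_intros hH1 hH2 hA1 hA2)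
    show ?thesis
    proof (cases "\<forall>z. K z = 0")
      case True
      define lam where "lam = H1 z0 / A1 z0"
      have "open {z. A1 z \<noteq> (\<lambda>_. 0) z}"
        by (rule open_Collect_neq) (use hA1 holomorphic_on_imp_continuous_on in auto)
      then obtain r where r: "r > 0" "ball z0 r \<subseteq> {z. A1 z \<noteq> 0}"
        using z0 by (metis mem_Collect_eq open_contains_ball_eq)
      have "\<exists>c. \<forall>x\<in>ball z0 r. (H1 x - lam * A1 x) / A1 x = c"
      proof (rule has_field_derivative_zero_constant)
        fix x assume x: "x \<in> ball z0 r"
        then have "A1 x \<noteq> 0" using r by auto
        have "((\<lambda>x. (H1 x - lam * A1 x) / A1 x) has_field_derivative
              ((H2 x - lam * A2 x) * A1 x - (H1 x - lam * A1 x) * A2 x) / (A1 x * A1 x)) (at x)"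
          by (intro DERIV_divide DERIV_diff DERIV_cmult dH1 dA1 \<open>A1 x \<noteq> 0\<close>)
        moreover have "((H2 x - lam * A2 x) * A1 x - (H1 x - lam * A1 x) * A2 x) = K x"
          by (simp add: K_def algebra_simps)
        ultimately show "((\<lambda>x. (H1 x - lam * A1 x) / A1 x) has_field_derivative 0) (at x within ball z0 r)"
          using True by (auto intro: has_field_derivative_at_within)
      qed auto
      then obtain c where c: "\<And>x. x \<in> ball z0 r \<Longrightarrow> (H1 x - lam * A1 x) / A1 x = c" by blast
      have "c = 0" using c[of z0] r z0 by (simp add: lam_def)
      have zb: "H1 x - lam * A1 x = 0" if "x \<in> ball z0 r" for x
        using c[OF that] \<open>c = 0\<close> r that by auto
      have all: "H1 z - lam * A1 z = 0" for z
      proof -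
        have "(\<lambda>z. H1 z - lam * A1 z) holomorphic_on UNIV"
          by (intro holomorphic_intros hH1 hA1)
        then show ?thesis
          using analytic_continuation_open[of "ball z0 r" UNIV "\<lambda>z. H1 z - lam * A1 z" "\<lambda>z. 0" z] zb r
          by auto
      qed
      show ?thesis
      proof (intro exI[of _ "{- lam}"] conjI allI impI)
        fix a z w assume "a \<notin> {- lam}" "H1 z + a * A1 z = 0"
        then show "\<alpha> z = \<alpha> w" using crit[of z a] all[of z] by (auto simp: field_simps)
      qed auto
    next
      case False
      then obtain z1 where z1: "K z1 \<noteq> 0" by auto
      define Zk where "Zk = {z. K z = 0}"
      have cZ: "countable Zk"
      proof (rule no_limpt_imp_countable)
        fix \<xi> show "\<not> \<xi> islimpt Zk"
        proof
          assume "\<xi> islimpt Zk"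
          then have "K z1 = 0"
            by (intro analytic_continuation[of K UNIV Zk \<xi> z1] hK) (auto simp: Zk_def)
          then show False using z1 by simp
        qed
      qed
      define phi where "phi z = - H1 z / A1 z" for z
      define phi' where "phi' z = - K z / (A1 z * A1 z)" for z
      define G where "G z = H z + phi z * \<alpha> z" for z
      have dphi: "(phi has_field_derivative phi' z) (at z)" if "A1 z \<noteq> 0" for z
      proof -
        have "((\<lambda>z. - H1 z / A1 z) has_field_derivative (- H2 z * A1 z - (- H1 z) * A2 z) / (A1 z * A1 z)) (at z)"
          by (intro DERIV_divide DERIV_minus dH1 dA1 that)
        moreover have "(- H2 z * A1 z - (- H1 z) * A2 z) / (A1 z * A1 z) = phi' z"
          by (simp add: phi'_def K_def algebra_simps)
        ultimately show ?thesis unfolding phi_def[abs_def] by simp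
      qed
      have dG: "(G has_field_derivative phi' z * \<alpha> z) (at z)" if "A1 z \<noteq> 0" for z
      proof -
        have "(G has_field_derivative H1 z + (phi' z * \<alpha> z + A1 z * phi z)) (at z)"
          unfolding G_def[abs_def] by (intro DERIV_add DERIV_mult dH dA dphi that)
        moreover have "H1 z + (phi' z * \<alpha> z + A1 z * phi z) = phi' z * \<alpha> z"
          using that by (simp add: phi_def)
        ultimately show ?thesis by simp
      qed
      define P where "P = {(z, w). A1 z \<noteq> 0 \<and> A1 w \<noteq> 0 \<and> K z \<noteq> 0 \<and> K w \<noteq> 0 \<and>
                               phi z = phi w \<and> G z = G w \<and> \<alpha> z \<noteq> \<alpha> w}"
      have cP: "countable P"
      proof (rule discrete_countable)
        fix p assume "p \<in> P"
        then obtain z w where p: "p = (z, w)" and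
          pz: "A1 z \<noteq> 0" "A1 w \<noteq> 0" "K z \<noteq> 0" "K w \<noteq> 0" "phi z = phi w" "G z = G w" "\<alpha> z \<noteq> \<alpha> w"
          by (auto simp: P_def)
        define F where "F q = (phi (fst q) - phi (snd q), G (fst q) - G (snd q))" for q :: "complex \<times> complex"
        define L where "L h = (phi' z * fst h - phi' w * snd h,
                               phi' z * \<alpha> z * fst h - phi' w * \<alpha> w * snd h)" for h :: "complex \<times> complex"
        have fst': "((\<lambda>q::complex\<times>complex. fst q) has_derivative (\<lambda>h. fst h)) (at (z, w))"
          by (rule has_derivative_fst[OF has_derivative_ident])
        have snd': "((\<lambda>q::complex\<times>complex. snd q) has_derivative (\<lambda>h. snd h)) (at (z, w))"
          by (rule has_derivative_snd[OF has_derivative_ident])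
        have d1: "((\<lambda>q. phi (fst q)) has_derivative (\<lambda>h. phi' z * fst h)) (at (z, w))"
          using dphi[OF pz(1)] unfolding has_field_derivative_def
          by (intro has_derivative_compose[OF fst']) simp
        have d2: "((\<lambda>q. phi (snd q)) has_derivative (\<lambda>h. phi' w * snd h)) (at (z, w))"
          using dphi[OF pz(2)] unfolding has_field_derivative_def
          by (intro has_derivative_compose[OF snd']) simp
        have d3: "((\<lambda>q. G (fst q)) has_derivative (\<lambda>h. phi' z * \<alpha> z * fst h)) (at (z, w))"
          using dG[OF pz(1)] unfolding has_field_derivative_def
          by (intro has_derivative_compose[OF fst']) simp
        have d4: "((\<lambda>q. G (snd q)) has_derivative (\<lambda>h. phi' w * \<alpha> w * snd h)) (at (z, w))"
          using dG[OF pz(2)] unfolding has_field_derivative_def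
          by (intro has_derivative_compose[OF snd']) simp
        have dF: "(F has_derivative L) (at p)"
          unfolding F_def[abs_def] L_def[abs_def] p
          by (intro has_derivative_Pair has_derivative_diff d1 d2 d3 d4)
        have pz1: "phi' z \<noteq> 0" using pz by (simp add: phi'_def)
        have pz2: "phi' w \<noteq> 0" using pz by (simp add: phi'_def)
        have injL: "inj L"
        proof (rule injI)
          fix x y assume "L x = L y"
          define d where "d = x - y"
          have "L d = L x - L y" by (simp add: L_def d_def prod_eq_iff algebra_simps)
          then have Ld: "L d = 0" using \<open>L x = L y\<close> by simp
          then have e1: "phi' z * fst d = phi' w * snd d"
            and e2: "phi' z * \<alpha> z * fst d = phi' w * \<alpha> w * snd d"
            by (simp_all add: L_def prod_eq_iff)
          have e3: "phi' z * fst d * \<alpha> w = phi' w * \<alpha> w * snd d"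
            using e1 by (metis mult.commute mult.left_commute)
          have "phi' z * fst d * (\<alpha> z - \<alpha> w) = phi' z * \<alpha> z * fst d - phi' z * fst d * \<alpha> w"
            by (simp add: algebra_simps)
          also have "\<dots> = 0" by (simp only: e2 e3 diff_self)
          finally have "fst d = 0" using pz1 pz(7) by simp
          then have "snd d = 0" using e1 pz2 by simp
          then have "d = 0" using \<open>fst d = 0\<close> by (simp add: prod_eq_iff)
          then show "x = y" by (simp add: d_def)
        qed
        obtain e where e: "e > 0" "\<And>q. dist q p < e \<Longrightarrow> F q = F p \<Longrightarrow> q = p"
          using isolated_from_inj_deriv[OF dF injL] by blast
        show "\<exists>e>0. \<forall>q\<in>P. dist q p < e \<longrightarrow> q = p"
        proof (intro exI[of _ e] conjI ballI impI)
          fix q assume "q \<in> P" "dist q p < e"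
          moreover have "F q = F p" using \<open>q \<in> P\<close> pz p by (auto simp: P_def F_def)
          ultimately show "q = p" using e by blast
        qed (use e in auto)
      qed
      show ?thesis
      proof (intro exI[of _ "phi ` Zk \<union> (phi \<circ> fst) ` P"] conjI allI impI)
        show "countable (phi ` Zk \<union> (phi \<circ> fst) ` P)" using cZ cP by auto
        fix a z w
        assume a: "a \<notin> phi ` Zk \<union> (phi \<circ> fst) ` P" and cz: "H1 z + a * A1 z = 0"
          and cw: "H1 w + a * A1 w = 0" and eq: "H z + a * \<alpha> z = H w + a * \<alpha> w"
        have az: "A1 z \<noteq> 0" "a = phi z" using crit[OF cz] by (auto simp: phi_def)
        have aw: "A1 w \<noteq> 0" "a = phi w" using crit[OF cw] by (auto simp: phi_def)
        have Kz: "K z \<noteq> 0" using a az by (auto simp: Zk_def)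
        have Kw: "K w \<noteq> 0" using a aw by (auto simp: Zk_def)
        show "\<alpha> z = \<alpha> w"
        proof (rule ccontr)
          assume ne: "\<alpha> z \<noteq> \<alpha> w"
          have "(z, w) \<in> P" using az aw Kz Kw ne eq by (auto simp: P_def G_def)
          then have "a \<in> (phi \<circ> fst) ` P" using az by force
          then show False using a by blast
        qed
      qed
    qed
  qed
  then obtain E where E: "countable E" and
    EE: "\<And>a z w. a \<notin> E \<Longrightarrow> H1 z + a * A1 z = 0 \<Longrightarrow> H1 w + a * A1 w = 0 \<Longrightarrow>
        H z + a * \<alpha> z = H w + a * \<alpha> w \<Longrightarrow> \<alpha> z = \<alpha> w" by blast
  show ?thesis
    by (intro exI[of _ E] conjI E allI impI) (auto simp: dHa intro: EE)
qed

end
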